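(* Let $\Pi_n$ be a PARITY$_n$ program such that no rule $y\leftarrow B$ of $\Pi_n$ has $y\in var(B)$. (i) If $x\leftarrow B\in\Pi_n$ with $x$ a variable, $B$ consistent, and $B\cup\{x\}$ does not fully cover $\{x_1,\dots,x_n\}$, then $not\ not\ x\in B$. (ii) If $H\leftarrow B\in\Pi_n$ with $B$ consistent and either $H=\bot$, or $H$ is a variable $x$ with $not\ x\in B$ (i.e. $B\cup\{H\}$ is inconsistent), then $B$ fully covers $\{x_1,\dots,x_n\}$.
   Context: A rule element is one of $\top$, $\bot$, $x$, $not\ x$, $not\ not\ x$, where $x$ is a variable. A (canonical) rule is $H\leftarrow B$ with $H$ a variable or $\bot$ and $B$ a finite set of rule elements; a canonical program is a finite set of rules. For a body $B$, $var(B)=\{e\in B: e\text{ is a variable}\}$. For a set of variables $I$: $I\models\top$; $I\not\models\bot$; $I\models x$ iff $I\models not\ not\ x$ iff $x\in I$; $I\models not\ x$ iff $x\notin I$; $I\models B$ iff $I$ satisfies every element of $B$; $I$ is closed under $H\leftarrow B$ if $I\models B$ implies $I\models H$. The reduct $\Pi^I$ replaces $not\ not\ x$ by $\top$ if $x\in I$ else $\bot$, and $not\ x$ by $\top$ if $x\notin I$ else $\bot$; $I$ is an answer set of $\Pi$ if $I$ is the least set closed under all rules of $\Pi^I$; $Ans(\Pi)$ is the set of answer sets; $var(\Pi)$ the set of variables occurring in $\Pi$. Strings $w\in\{0,1\}^n$ are identified with $\{x_i:w_i=1\}$; PARITY$_n$ is the set of strings in $\{0,1\}^n$ with an odd number of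 1's; a PARITY$_n$ program is a canonical program $\Pi$ with $var(\Pi)=\{x_1,\dots,x_n\}$ and $Ans(\Pi)=$ PARITY$_n$. For a set $B$ of rule elements, $S(B)=\{I\subseteq\{x_1,\dots,x_n\}: I\models B\}$; $B$ is consistent if $S(B)\neq\emptyset$. $B$ covers a variable $x$ if $x\in B$, $not\ x\in B$ or $not\ not\ x\in B$; $B$ fully covers $\{x_1,\dots,x_n\}$ if it covers every $x_i$. *)

theory Defs
  imports Main
begin

(* Variables x_i are represented by natural numbers i; the program's variables are {1..n}. *)
datatype elem = Top | Bot | Var nat | Not nat | NotNot nat

(* Head: Some x is the variable x, None is bottom *)
type_synonym rule = "nat option \<times> elem set"
type_synonym program = "rule set"

fun sat_elem :: "nat set \<Rightarrow> elem \<Rightarrow> bool" where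
  "sat_elem I Top = True"
| "sat_elem I Bot = False"
| "sat_elem I (Var x) = (x \<in> I)"
| "sat_elem I (Not x) = (x \<notin> I)"
| "sat_elem I (NotNot x) = (x \<in> I)"

definition sat_body :: "nat set \<Rightarrow> elem set \<Rightarrow> bool" where
  "sat_body I B = (\<forall>e\<in>B. sat_elem I e)"

fun sat_head :: "nat set \<Rightarrow> nat option \<Rightarrow> bool" where
  "sat_head I None = False"
| "sat_head I (Some x) = (x \<in> I)"

definition closed_under :: "nat set \<Rightarrow> rule \<Rightarrow> bool" where
  "closed_under I r = (sat_body I (snd r) \<longrightarrow> sat_head I (fst r))"

fun reduct_elem :: "nat set \<Rightarrow> elem \<Rightarrow> elem" where
  "reduct_elem I (NotNot x) = (if x \<in> I then Top else Bot)"
| "reduct_elem I (Not x) = (if x \<notin> I then Top else Bot)"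
| "reduct_elem I e = e"

definition reduct :: "program \<Rightarrow> nat set \<Rightarrow> program" where
  "reduct P I = (\<lambda>(h, B). (h, reduct_elem I ` B)) ` P"

definition answer_set :: "program \<Rightarrow> nat set \<Rightarrow> bool" where
  "answer_set P I = ((\<forall>r\<in>reduct P I. closed_under I r) \<and>
     (\<forall>J. (\<forall>r\<in>reduct P I. closed_under J r) \<longrightarrow> I \<subseteq> J))"

definition Ans :: "program \<Rightarrow> nat set set" where
  "Ans P = {I. answer_set P I}"

fun elem_vars :: "elem \<Rightarrow> nat set" where
  "elem_vars (Var x) = {x}"
| "elem_vars (Not x) = {x}"
| "elem_vars (NotNot x) = {x}"
| "elem_vars _ = {}"

fun head_vars :: "nat option \<Rightarrow> nat set" where
  "head_vars None = {}"
| "head_vars (Some x) = {x}"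

definition prog_vars :: "program \<Rightarrow> nat set" where
  "prog_vars P = (\<Union>(h, B)\<in>P. head_vars h \<union> (\<Union>e\<in>B. elem_vars e))"

(* var(B): the variables occurring positively (as plain elements) in B *)
definition body_var :: "elem set \<Rightarrow> nat set" where
  "body_var B = {x. Var x \<in> B}"

definition canonical_program :: "program \<Rightarrow> bool" where
  "canonical_program P = (finite P \<and> (\<forall>(h, B)\<in>P. finite B))"

definition PARITY :: "nat \<Rightarrow> nat set set" where
  "PARITY n = {I. I \<subseteq> {1..n} \<and> odd (card I)}"

definition parity_program :: "nat \<Rightarrow> program \<Rightarrow> bool" where
  "parity_program n P = (canonical_program P \<and> prog_vars P = {1..n} \<and> Ans P = PARITY n)"

definition S :: "nat \<Rightarrow> elem set \<Rightarrow> nat set set" where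
  "S n B = {I. I \<subseteq> {1..n} \<and> sat_body I B}"

definition consistent :: "nat \<Rightarrow> elem set \<Rightarrow> bool" where
  "consistent n B = (S n B \<noteq> {})"

definition covers :: "elem set \<Rightarrow> nat \<Rightarrow> bool" where
  "covers B x = (Var x \<in> B \<or> Not x \<in> B \<or> NotNot x \<in> B)"

definition fully_covers :: "elem set \<Rightarrow> nat \<Rightarrow> bool" where
  "fully_covers B n = (\<forall>i\<in>{1..n}. covers B i)"

end

theory Submission
  imports Defs
begin

lemma model_of_ans:
  assumes "(h, B) \<in> P" "J \<in> Ans P" "sat_body J B"
  shows "sat_head J h"
proof -
  have r: "(h, reduct_elem J ` B) \<in> reduct P J" using assms(1) unfolding reduct_def by force
  have "sat_body J (reduct_elem J ` B)"
    using assms(3) unfolding sat_body_def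
  proof (intro ballI)
    fix e assume "\<forall>e\<in>B. sat_elem J e" "e \<in> reduct_elem J ` B"
    then obtain e0 where "e0 \<in> B" "e = reduct_elem J e0" by blast
    with \<open>\<forall>e\<in>B. sat_elem J e\<close> show "sat_elem J e" by (cases e0) auto
  qed
  with r assms(2) show ?thesis unfolding Ans_def answer_set_def closed_under_def by auto
qed

lemma sat_del:
  assumes "\<not> covers B y" shows "sat_body (I - {y}) B = sat_body I B"
  unfolding sat_body_def
proof (intro ball_cong refl)
  fix e assume "e \<in> B"
  with assms have "e \<noteq> Var y" "e \<noteq> Not y" "e \<noteq> NotNot y" unfolding covers_def by auto
  then show "sat_elem (I - {y}) e = sat_elem I e" by (cases e) auto
qed

lemma sat_ins:
  assumes "\<not> covers B y" shows "sat_body (insert y I) B = sat_body I B"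
  unfolding sat_body_def
proof (intro ball_cong refl)
  fix e assume "e \<in> B"
  with assms have "e \<noteq> Var y" "e \<noteq> Not y" "e \<noteq> NotNot y" unfolding covers_def by auto
  then show "sat_elem (insert y I) e = sat_elem I e" by (cases e) auto
qed

lemma flip:
  assumes "I \<subseteq> {1..n}" "sat_body I B" "y \<in> {1..n}" "\<not> covers B y"
  shows "\<exists>J. J \<in> PARITY n \<and> sat_body J B \<and> J - {y} = I - {y}"
proof -
  let ?I0 = "I - {y}"
  have f: "finite ?I0" using assms(1) finite_subset by blast
  have s0: "sat_body ?I0 B" using sat_del[OF assms(4)] assms(2) by simp
  have s1: "sat_body (insert y ?I0) B" using sat_ins[OF assms(4), of ?I0] s0 by simp
  have c: "card (insert y ?I0) = Suc (card ?I0)" using f card_insert_disjoint[OF f, of y] by blast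
  show ?thesis
  proof (cases "odd (card ?I0)")
    case True
    then show ?thesis using s0 assms(1) unfolding PARITY_def by (intro exI[of _ ?I0]) auto
  next
    case False
    then show ?thesis using s1 c assms(1,3) unfolding PARITY_def
      by (intro exI[of _ "insert y ?I0"]) auto
  qed
qed

theorem mainTheorem15:
  fixes n :: nat and P :: program
  assumes par: "parity_program n P"
    and noself: "\<forall>y B. (Some y, B) \<in> P \<longrightarrow> y \<notin> body_var B"
  shows "(\<forall>x B. (Some x, B) \<in> P \<longrightarrow> consistent n B \<longrightarrow>
              \<not> fully_covers (insert (Var x) B) n \<longrightarrow> NotNot x \<in> B)
       \<and> (\<forall>H B. (H, B) \<in> P \<longrightarrow> consistent n B \<longrightarrow>
              (H = None \<or> (\<exists>x. H = Some x \<and> Not x \<in> B)) \<longrightarrow> fully_covers B n)"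
proof -
  have ans: "\<And>J. J \<in> PARITY n \<Longrightarrow> J \<in> Ans P" using par unfolding parity_program_def by auto
  have partii: "\<And>H B. (H, B) \<in> P \<Longrightarrow> consistent n B \<Longrightarrow>
              (H = None \<or> (\<exists>x. H = Some x \<and> Not x \<in> B)) \<Longrightarrow> fully_covers B n"
  proof (rule ccontr)
    fix H B assume r: "(H, B) \<in> P" and c: "consistent n B"
      and h: "H = None \<or> (\<exists>x. H = Some x \<and> Not x \<in> B)" and nf: "\<not> fully_covers B n"
    obtain y where y: "y \<in> {1..n}" "\<not> covers B y" using nf unfolding fully_covers_def by blast
    obtain I where I: "I \<subseteq> {1..n}" "sat_body I B" using c unfolding consistent_def S_def by blast
    obtain J where J: "J \<in> PARITY n" "sat_body J B" using flip[OF I y] by blast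
    have "sat_head J H" using model_of_ans[OF r ans[OF J(1)] J(2)] .
    moreover have "\<not> sat_head J H"
    proof (cases H)
      case None then show ?thesis by simp
    next
      case (Some x)
      with h have "Not x \<in> B" by auto
      with J(2) have "x \<notin> J" unfolding sat_body_def by force
      then show ?thesis using Some by simp
    qed
    ultimately show False by blast
  qed
  have parti: "\<And>x B. (Some x, B) \<in> P \<Longrightarrow> consistent n B \<Longrightarrow>
              \<not> fully_covers (insert (Var x) B) n \<Longrightarrow> NotNot x \<in> B"
  proof (rule ccontr)
    fix x B assume r: "(Some x, B) \<in> P" and c: "consistent n B"
      and nf: "\<not> fully_covers (insert (Var x) B) n" and nn: "NotNot x \<notin> B"
    obtain y where y: "y \<in> {1..n}" "\<not> covers (insert (Var x) B) y"
      using nf unfolding fully_covers_def by blast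
    have yx: "y \<noteq> x" using y(2) unfolding covers_def by auto
    have yB: "\<not> covers B y" using y(2) unfolding covers_def by auto
    have nv: "Var x \<notin> B" using noself r unfolding body_var_def by auto
    show False
    proof (cases "Not x \<in> B")
      case True
      have "fully_covers B n" using partii[OF r c] True by auto
      then show False using yB y(1) unfolding fully_covers_def by blast
    next
      case False
      have xB: "\<not> covers B x" using False nv nn unfolding covers_def by auto
      obtain I where I: "I \<subseteq> {1..n}" "sat_body I B" using c unfolding consistent_def S_def by blast
      have I': "I - {x} \<subseteq> {1..n}" "sat_body (I - {x}) B" using I sat_del[OF xB] by auto
      obtain J where J: "J \<in> PARITY n" "sat_body J B" "J - {y} = I - {x} - {y}"
        using flip[OF I' y(1) yB] by blast
      have "x \<notin> J" using J(3) yx by blast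
      moreover have "sat_head J (Some x)" using model_of_ans[OF r ans[OF J(1)] J(2)] .
      ultimately show False by simp
    qed
  qed
  show ?thesis using parti partii by blast
qed

end
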